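(* For every integer $d \geq 2$, the morphism $(\mathbb{C}^* )^2 \to \mathbb{C}^3$, $(x,y) \mapsto (x^{-1} + d y^{-1},\ x + dy,\ x^2 + dy^2)$ is injective. *)

theory Defs
  imports Complex_Main
begin

end

theory Submission
  imports Defs
begin

lemma key:
  fixes x y x' y' D :: complex
  assumes nz: "x \<noteq> 0" "y \<noteq> 0" "x' \<noteq> 0" "y' \<noteq> 0"
    and D1: "D \<noteq> 0" "D \<noteq> 1" "D + 1 \<noteq> 0"
    and c: "inverse x + D * inverse y = inverse x' + D * inverse y'"
    and a: "x + D * y = x' + D * y'"
    and b: "x^2 + D * y^2 = x'^2 + D * y'^2"
  shows "x = x' \<and> y = y'"
proof (cases "y = y'")
  case True then show ?thesis using a by simp
next
  case False
  define v where "v = y - y'"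
  have v: "v \<noteq> 0" using False v_def by simp
  have u: "x - x' = - D * v"
  proof -
    have "x - x' = D * y' - D * y" using arg_cong[OF a, of "\<lambda>t. t - x' - D * y"] by (simp add: algebra_simps)
    thus ?thesis unfolding v_def by (simp add: algebra_simps)
  qed
  have e: "x^2 - x'^2 + D*(y^2 - y'^2) = 0"
    using arg_cong[OF b, of "\<lambda>t. t - x'^2 - D*y'^2"] by (simp add: algebra_simps)
  have "(x - x') * (x + x') + D * v * (y + y') = x^2 - x'^2 + D*(y^2 - y'^2)"
    unfolding v_def by (simp add: algebra_simps power2_eq_square)
  hence "(x - x') * (x + x') + D * v * (y + y') = 0" using e by simp
  hence "D * v * ((y + y') - (x + x')) = 0" using u by (simp add: algebra_simps)
  hence s: "x + x' = y + y'" using v D1 by simp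
  have "(x' - x) / (x * x') + D * (y' - y) / (y * y') = 0"
    using c nz by (simp add: field_simps)
  moreover have "x' - x = D * v" using u by (simp add: algebra_simps)
  moreover have "y' - y = - v" unfolding v_def by simp
  ultimately have "D * v / (x * x') - D * v / (y * y') = 0"
    by (simp add: algebra_simps)
  hence "D * v * (y * y' - x * x') = 0" using nz by (simp add: field_simps)
  hence p: "x * x' = y * y'" using v D1 by simp
  have "(x - y) * (x - y') = 0"
  proof -
    have "(x - y) * (x - y') = x^2 - x * (y + y') + y * y'" by (simp add: algebra_simps power2_eq_square)
    also have "\<dots> = x^2 - x * (x + x') + x * x'" by (simp only: s p)
    also have "\<dots> = 0" by (simp add: algebra_simps power2_eq_square)
    finally show ?thesis .
  qed
  hence "x = y \<or> x = y'" by simp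
  then show ?thesis
  proof
    assume "x = y"
    hence "x' = y'" using s by simp
    hence "v = - D * v" using u \<open>x = y\<close> v_def by simp
    have "v + D * v = 0" by (subst (1) \<open>v = - D * v\<close>) simp
    then have "(1 + D) * v = 0" by (simp add: algebra_simps)
    thus ?thesis using v D1 by (simp add: add.commute)
  next
    assume "x = y'"
    hence "x' = y" using s by simp
    hence "- v = - D * v" using u \<open>x = y'\<close> v_def by simp
    hence "v = D * v" by simp
    hence "D * v - v = 0" by simp
    hence "(D - 1) * v = 0" by (simp add: algebra_simps)
    thus ?thesis using v D1 by simp
  qed
qed

theorem lemma4p4:
  fixes d :: int
  assumes "d \<ge> 2"
  shows "inj_on (\<lambda>(x::complex, y::complex).
            (inverse x + of_int d * inverse y, x + of_int d * y, x^2 + of_int d * y^2))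
          {(x, y). x \<noteq> 0 \<and> y \<noteq> 0}"
proof (rule inj_onI)
  fix p q :: "complex \<times> complex"
  assume hp: "p \<in> {(x, y). x \<noteq> 0 \<and> y \<noteq> 0}" and hq: "q \<in> {(x, y). x \<noteq> 0 \<and> y \<noteq> 0}"
    and heq: "(\<lambda>(x::complex, y::complex).
            (inverse x + of_int d * inverse y, x + of_int d * y, x^2 + of_int d * y^2)) p =
          (\<lambda>(x::complex, y::complex).
            (inverse x + of_int d * inverse y, x + of_int d * y, x^2 + of_int d * y^2)) q"
  obtain x y where pxy: "p = (x, y)" by (cases p)
  obtain x' y' where qxy: "q = (x', y')" by (cases q)
  have h: "x \<noteq> 0" "y \<noteq> 0" "x' \<noteq> 0" "y' \<noteq> 0" using hp hq pxy qxy by auto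
  have h5: "(inverse x + of_int d * inverse y, x + of_int d * y, x^2 + of_int d * y^2) =
     (inverse x' + of_int d * inverse y', x' + of_int d * y', x'^2 + of_int d * y'^2)"
    using heq pxy qxy by simp
  have D1: "(of_int d :: complex) \<noteq> 0" using assms by simp
  have D2: "(of_int d :: complex) \<noteq> 1"
  proof
    assume "(of_int d :: complex) = 1"
    hence "d = 1" using of_int_eq_1_iff by blast
    thus False using assms by simp
  qed
  have D3: "(of_int d :: complex) + 1 \<noteq> 0"
  proof
    assume "(of_int d :: complex) + 1 = 0"
    hence "(of_int (d + 1) :: complex) = 0" by simp
    hence "d + 1 = 0" using of_int_eq_0_iff by blast
    thus False using assms by simp
  qed
  note D = D1 D2 D3
  have "x = x' \<and> y = y'" using key[OF h(1-4) D] h5 by simp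
  thus "p = q" using pxy qxy by simp
qed

end
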